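(* Fix a real constant $c>-1$, let $\alpha\to\infty$ and put $\beta=\alpha-c$ (so that $\alpha>\beta-1>0$ for all sufficiently large $\alpha$). Then \[ \lim_{\alpha\to\infty}\alpha^{\frac{c+1}{2}}\,I(\alpha,\beta)=6^{\frac{c+1}{2}}\,\Gamma\!\left(\frac{c+1}{2}\right). \] In particular, \[ \lim_{\alpha\to\infty}\sqrt{\alpha}\,I(\alpha,\alpha)=\sqrt{6\pi}. \]
   Context: For real $\alpha,\beta$ with $\alpha>\beta-1>0$, $I(\alpha,\beta)=\int_{-\infty}^{\infty}|\sin t|^{\alpha}|t|^{-\beta}\,dt$; $\Gamma$ denotes the gamma function. *)

theory Defs
  imports "HOL-Analysis.Analysis"
begin

text \<open>I(alpha,beta) = integral over the real line of |sin t|^alpha |t|^(-beta)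
  (Lebesgue integral w.r.t. Lebesgue-Borel measure; the point t = 0 is a null set).\<close>
definition I_int :: "real \<Rightarrow> real \<Rightarrow> real" where
  "I_int \<alpha> \<beta> = (\<integral>t. \<bar>sin t\<bar> powr \<alpha> * \<bar>t\<bar> powr (- \<beta>) \<partial>lborel)"

end

theory Submission
  imports Defs "HOL-Real_Asymp.Real_Asymp"
begin


lemma gamma_bochner:
  assumes "s > (0::real)"
  shows "has_bochner_integral lborel (\<lambda>t. indicator {0<..} t * (t powr (s - 1) / exp t)) (Gamma s)"
proof -
  have eq: "(\<lambda>t. indicator {0<..} t * (t powr (s - 1) / exp t)) = (\<lambda>t. indicator {0..} t * t powr (s - 1) / exp t)"
    by (auto simp: indicator_def fun_eq_iff)
  show ?thesis unfolding eq
    by (rule has_bochner_integral_nn_integral) (use assms Gamma_real_pos in \<open>auto simp: Gamma_conv_nn_integral_real[OF assms]\<close>)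
qed

lemma gauss_half:
  fixes c :: real
  assumes c: "c > -1"
  shows "set_integrable lborel {0<..} (\<lambda>x. exp (-(x^2)/6) * x powr c)"
    "(LBINT x:{0<..}. exp (-(x^2)/6) * x powr c) = 6 powr ((c+1)/2) * Gamma ((c+1)/2) / 2"
proof -
  define f where "f = (\<lambda>x::real. exp (-(x^2)/6) * x powr c)"
  define g where "g = (\<lambda>u::real. sqrt (6*u))"
  define g' where "g' = (\<lambda>u::real. 3 / sqrt (6*u))"
  define K where "K = (3 * 6 powr ((c-1)/2) :: real)"
  define s where "s = (c+1)/2"
  have s: "s > 0" using c by (simp add: s_def)
  have ei: "einterval 0 \<infinity> = ({0<..}::real set)" by (auto simp: einterval_iff)
  have fg: "f (g u) * g' u = K * (u powr (s - 1) / exp u)" if "u > 0" for u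
  proof -
    define v where "v = 6 * u"
    have v: "v > 0" using that by (simp add: v_def)
    have sq: "sqrt v = v powr (1/2)" using v by (simp add: powr_half_sqrt)
    have "f (g u) * g' u = exp (-u) * (v powr (1/2)) powr c * (3 / v powr (1/2))"
      using that by (simp add: f_def g_def g'_def v_def[symmetric] sq[symmetric]) (simp add: v_def)
    also have "\<dots> = 3 * exp (-u) * (v powr (c/2) * v powr (-1/2))"
      using v by (simp add: powr_powr powr_minus field_simps)
    also have "\<dots> = 3 * exp (-u) * v powr ((c-1)/2)"
      by (simp add: powr_add[symmetric] diff_divide_distrib)
    also have "\<dots> = K * (u powr (s - 1) / exp u)"
    proof -
      have e1: "v powr ((c-1)/2) = 6 powr ((c-1)/2) * u powr ((c-1)/2)"
        using that by (simp add: v_def powr_mult)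
      have e2: "s - 1 = (c-1)/2" by (simp add: s_def field_simps)
      show ?thesis unfolding K_def e2 by (subst e1) (simp add: exp_minus field_simps)
    qed
    finally show ?thesis .
  qed
  have hb: "has_bochner_integral lborel (\<lambda>t. indicator {0<..} t * (K * (t powr (s - 1) / exp t))) (K * Gamma s)"
    using has_bochner_integral_mult_right[OF gamma_bochner[OF s], of K] by (simp add: ac_simps)
  have int_fg: "set_integrable lborel (einterval 0 \<infinity>) (\<lambda>x. f (g x) * g' x)"
  proof -
    have "integrable lborel (\<lambda>t. indicator {0<..} t * (K * (t powr (s - 1) / exp t)))"
      using hb integrable.intros by blast
    moreover have "(\<lambda>x. indicator (einterval 0 \<infinity>) x *\<^sub>R (f (g x) * g' x)) = (\<lambda>t. indicator {0<..} t * (K * (t powr (s - 1) / exp t)))"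
      by (auto simp: fun_eq_iff indicator_def fg einterval_iff)
    ultimately show ?thesis unfolding set_integrable_def by simp
  qed
  have val_fg: "(LBINT x=0..\<infinity>. f (g x) * g' x) = K * Gamma s"
  proof -
    have "(LBINT x=0..\<infinity>. f (g x) * g' x) = (\<integral>t. indicator {0<..} t * (K * (t powr (s - 1) / exp t)) \<partial>lborel)"
      unfolding interval_lebesgue_integral_def set_lebesgue_integral_def
      by (auto intro!: Bochner_Integration.integral_cong simp: indicator_def fg einterval_iff)
    also have "\<dots> = K * Gamma s" using hb by (rule has_bochner_integral_integral_eq)
    finally show ?thesis .
  qed
  have sub: "set_integrable lborel (einterval 0 \<infinity>) f \<and> (LBINT x=0..\<infinity>. f x) = (LBINT x=0..\<infinity>. f (g x) * g' x)"
  proof (intro conjI)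
    have d: "DERIV g x :> g' x" if "0 < ereal x" "ereal x < \<infinity>" for x
    proof -
      have "x > 0" using that by simp
      then show ?thesis unfolding g_def g'_def
        by (auto intro!: derivative_eq_intros simp: field_simps real_sqrt_mult)
    qed
    have cf: "isCont f (g x)" if "0 < ereal x" "ereal x < \<infinity>" for x
    proof -
      have "g x > 0" using that by (simp add: g_def)
      then show ?thesis unfolding f_def by (auto intro!: continuous_intros)
    qed
    have cg: "isCont g' x" if "0 < ereal x" "ereal x < \<infinity>" for x
    proof -
      have "x > 0" using that by simp
      then show ?thesis unfolding g'_def by (auto intro!: continuous_intros)
    qed
    have fn: "0 \<le> f (g x)" if "0 < ereal x" "ereal x < \<infinity>" for x
      using that by (simp add: f_def g_def)
    have gn: "0 \<le> g' x" if "0 \<le> ereal x" "ereal x \<le> \<infinity>" for x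
      using that by (simp add: g'_def)
    have lA: "((ereal \<circ> g \<circ> real_of_ereal) \<longlongrightarrow> 0) (at_right 0)"
      unfolding zero_ereal_def ereal_tendsto_simps g_def
      by (auto intro!: tendsto_eq_intros)
    have lB: "((ereal \<circ> g \<circ> real_of_ereal) \<longlongrightarrow> \<infinity>) (at_left \<infinity>)"
      unfolding ereal_tendsto_simps g_def
      by (auto intro!: filterlim_compose[OF sqrt_at_top] filterlim_tendsto_pos_mult_at_top filterlim_ident)
    note X = interval_integral_substitution_nonneg[of 0 "\<infinity>" g g' f 0 "\<infinity>", OF _ d cf cg fn gn lA lB int_fg]
    show "set_integrable lborel (einterval 0 \<infinity>) f" "(LBINT x=0..\<infinity>. f x) = (LBINT x=0..\<infinity>. f (g x) * g' x)"
      using X by auto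
  qed
  show "set_integrable lborel {0<..} (\<lambda>x. exp (-(x^2)/6) * x powr c)"
    using sub by (simp add: f_def ei)
  have "(LBINT x:{0<..}. exp (-(x^2)/6) * x powr c) = K * Gamma s"
    using sub val_fg by (simp add: f_def interval_lebesgue_integral_def ei)
  also have "K = 6 powr ((c+1)/2) / 2"
  proof -
    have "(c+1)/2 = (c-1)/2 + 1" by (simp add: field_simps)
    then have "6 powr ((c+1)/2) = 6 powr ((c-1)/2) * 6 powr 1" by (simp only: powr_add)
    then have "6 powr ((c+1)/2) = 6 powr ((c-1)/2) * 6" by simp
    then show ?thesis by (simp add: K_def)
  qed
  finally show "(LBINT x:{0<..}. exp (-(x^2)/6) * x powr c) = 6 powr ((c+1)/2) * Gamma ((c+1)/2) / 2"
    by (simp add: s_def)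
qed

lemma even_int:
  fixes f :: "real \<Rightarrow> real"
  assumes ev: "\<And>x. f (-x) = f x" and fm: "f \<in> borel_measurable borel"
    and si: "set_integrable lborel {0<..} f"
  shows "integrable lborel f" "integral\<^sup>L lborel f = 2 * (LBINT x:{0<..}. f x)"
proof -
  define h where "h = (\<lambda>x. indicator {0<..} x * f x)"
  have hi: "integrable lborel h" using si by (simp add: set_integrable_def h_def)
  have hm: "h \<in> borel_measurable borel" unfolding h_def using fm by measurable
  have hi2: "integrable lborel (\<lambda>x. h (0 + (-1) * x))"
    by (rule lborel_integrable_real_affine[OF hi]) simp
  have sum_int: "integrable lborel (\<lambda>x. h x + h (0 + (-1) * x))"
    using hi hi2 by (rule Bochner_Integration.integrable_add)
  have ae: "AE x in lborel. f x = h x + h (0 + (-1) * x)"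
    using AE_lborel_singleton[of 0]
    by eventually_elim (auto simp: h_def indicator_def ev)
  have m2: "(\<lambda>x. h x + h (0 + (-1) * x)) \<in> borel_measurable borel"
    using hm by measurable
  show fi: "integrable lborel f"
    using integrable_cong_AE[of f lborel "\<lambda>x. h x + h (0 + (-1) * x)"] fm m2 ae sum_int by simp
  have "integral\<^sup>L lborel f = integral\<^sup>L lborel (\<lambda>x. h x + h (0 + (-1) * x))"
    using integral_cong_AE[of f lborel "\<lambda>x. h x + h (0 + (-1) * x)"] fm m2 ae by simp
  also have "\<dots> = integral\<^sup>L lborel h + integral\<^sup>L lborel (\<lambda>x. h (0 + (-1) * x))"
    using hi hi2 by (rule Bochner_Integration.integral_add)
  also have "integral\<^sup>L lborel (\<lambda>x. h (0 + (-1) * x)) = integral\<^sup>L lborel h"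
    using lborel_integral_real_affine[of "-1" h 0] by simp
  finally show "integral\<^sup>L lborel f = 2 * (LBINT x:{0<..}. f x)"
    by (simp add: h_def set_lebesgue_integral_def)
qed


lemma my_sum5: "(\<Sum>m<5. (g::nat\<Rightarrow>real) m) = g 0 + g 1 + g 2 + g 3 + (g 4 :: real)"
  by (simp add: numeral_eq_Suc)
lemma my_f5: "(fact 5::real) = 120" by (simp add: fact_numeral)
lemma my_sc: "sin_coeff 0 = 0" "sin_coeff 1 = 1" "sin_coeff 2 = 0" "sin_coeff 3 = -1/6" "sin_coeff 4 = 0"
  by (simp_all add: sin_coeff_def fact_numeral)

lemma sin_taylor5: "sin u \<le> u - u^3/6 + u^5/120" if "u \<ge> 0" for u :: real
proof -
  have "\<bar>sin u - (\<Sum>m<5. sin_coeff m * u ^ m)\<bar> \<le> inverse (fact 5) * \<bar>u\<bar> ^ 5"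
    by (rule Maclaurin_sin_bound)
  moreover have "(\<Sum>m<5. sin_coeff m * u ^ m) = u - u^3/6"
    unfolding my_sum5 my_sc by simp
  moreover have "inverse (fact 5) * \<bar>u\<bar> ^ 5 = u^5/120"
    unfolding my_f5 using that by simp
  ultimately show ?thesis by linarith
qed

lemma poly_aux: "(1 - v/6 + v^2/120)^2 * (1 + v/4) \<le> (1::real)" if "0 \<le> v" "v \<le> 4"
proof -
  define p where "p = 1 - v/6 + v^2/120"
  define q where "q = 1 - (2/15) * v"
  have v2: "v^2 \<le> 4 * v" using that mult_right_mono[of v 4 v] by (simp add: power2_eq_square)
  have v20: "0 \<le> v^2" by simp
  have p0: "0 \<le> p" using that v20 unfolding p_def by linarith
  have pq: "p \<le> q" using that v2 unfolding p_def q_def by linarith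
  have "p^2 \<le> q^2" using p0 pq by (simp add: power_mono)
  then have "p^2 * (1 + v/4) \<le> q^2 * (1 + v/4)" using that by (intro mult_right_mono) auto
  also have "q^2 * (1 + v/4) = 1 - v/60 - 11 * v^2/225 + v^3/225"
    unfolding q_def by (simp add: power2_eq_square power3_eq_cube field_simps)
  also have "\<dots> \<le> 1"
  proof -
    have "v^3 \<le> 4 * v^2" using that mult_left_mono[of v 4 "v * v"] by (simp add: power2_eq_square power3_eq_cube mult_ac)
    then show ?thesis using that mult_nonneg_nonneg[of v v] unfolding power2_eq_square by linarith
  qed
  finally show ?thesis by (simp add: p_def)
qed

lemma sin_sq_bound: "(sin u)^2 * (1 + u^2/4) \<le> u^2" for u :: real
proof -
  have main: "(sin u)^2 * (1 + u^2/4) \<le> u^2" if u0: "u \<ge> 0" for u :: real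
  proof (cases "u \<ge> 2")
    case True
    have "(sin u)^2 \<le> 1" by (simp add: abs_square_le_1)
    then have "(sin u)^2 * (1 + u^2/4) \<le> 1 * (1 + u^2/4)"
      by (intro mult_right_mono) (auto simp: add_nonneg_nonneg)
    also have "\<dots> \<le> u^2"
    proof -
      have "2*2 \<le> u*u" by (rule mult_mono) (use True in auto)
      then have "4 \<le> u^2" by (simp add: power2_eq_square)
      then show ?thesis by simp
    qed
    finally show ?thesis .
  next
    case False
    have s0: "0 \<le> sin u" using u0 False pi_gt3 by (intro sin_ge_zero) auto
    define P where "P = u - u^3/6 + u^5/120"
    have sP: "sin u \<le> P" unfolding P_def using sin_taylor5[OF u0] .
    have "(sin u)^2 \<le> P^2" using s0 sP by (simp add: power_mono)
    then have "(sin u)^2 * (1 + u^2/4) \<le> P^2 * (1 + u^2/4)" by (intro mult_right_mono) auto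
    also have "P = u * (1 - u^2/6 + (u^2)^2/120)"
      by (simp add: P_def algebra_simps power2_eq_square power3_eq_cube numeral_eq_Suc)
    also have "(u * (1 - u^2/6 + (u^2)^2/120))^2 * (1 + u^2/4) = u^2 * ((1 - u^2/6 + (u^2)^2/120)^2 * (1 + u^2/4))"
      by (simp add: power_mult_distrib)
    also have "\<dots> \<le> u^2 * 1"
    proof (intro mult_left_mono poly_aux)
      have "u*u \<le> 2*2" by (rule mult_mono) (use False u0 in auto)
      then show "u^2 \<le> 4" by (simp add: power2_eq_square)
    qed auto
    finally show ?thesis by simp
  qed
  show ?thesis
  proof (cases "u \<ge> 0")
    case True then show ?thesis by (rule main)
  next
    case False then show ?thesis using main[of "-u"] by simp
  qed
qed


lemma ln_conc:
  fixes a0 a y :: real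
  assumes "0 < a0" "a0 \<le> a" "0 \<le> y"
  shows "a0 * ln (1 + y/a0) \<le> a * ln (1 + y/a)"
proof -
  define t where "t = a0 / a"
  have a: "a > 0" using assms by simp
  have t: "0 \<le> t" "t \<le> 1" using assms a by (auto simp: t_def)
  have cc: "(1 - t) * ln 1 + t * ln (1 + y/a0) \<le> ln ((1 - t) *\<^sub>R 1 + t *\<^sub>R (1 + y/a0))"
    by (rule concave_onD[OF ln_concave t]) (use assms in \<open>auto intro!: add_pos_nonneg\<close>)
  have e: "(1 - t) *\<^sub>R 1 + t *\<^sub>R (1 + y/a0) = 1 + y/a"
    using assms a by (simp add: t_def field_simps)
  have "t * ln (1 + y/a0) \<le> ln (1 + y/a)" using cc unfolding e by simp
  then have "a * (t * ln (1 + y/a0)) \<le> a * ln (1 + y/a)" using a by simp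
  then show ?thesis using a by (simp add: t_def)
qed

lemma ratio_bound:
  fixes a s :: real
  assumes "a > 0"
  shows "(\<bar>sin (s / sqrt a)\<bar> / \<bar>s / sqrt a\<bar>) powr a \<le> (1 + s^2/(4*a)) powr (-(a/2))"
proof (cases "s = 0")
  case True then show ?thesis by simp
next
  case False
  define u where "u = s / sqrt a"
  have u: "u \<noteq> 0" using False assms by (simp add: u_def)
  have u2: "u^2 = s^2 / a" using assms by (simp add: u_def power_divide)
  define r where "r = \<bar>sin u\<bar> / \<bar>u\<bar>"
  have r0: "0 \<le> r" by (simp add: r_def)
  have pos: "0 < 1 + u^2/4" by (simp add: add_pos_nonneg)
  have "(sin u)^2 * (1 + u^2/4) \<le> u^2" by (rule sin_sq_bound)
  then have r2: "r^2 \<le> inverse (1 + u^2/4)"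
    using u pos by (simp add: r_def power_divide field_simps power_abs)
  have "r powr a = (r^2) powr (a/2)"
  proof (cases "r = 0")
    case True then show ?thesis using assms by simp
  next
    case False
    then have rp: "r > 0" using r0 by simp
    have "r powr 2 = r^2" using powr_realpow[of r 2] rp by simp
    then have "(r^2) powr (a/2) = (r powr 2) powr (a/2)" by simp
    also have "\<dots> = r powr a" by (simp add: powr_powr)
    finally show ?thesis by simp
  qed
  also have "\<dots> \<le> (inverse (1 + u^2/4)) powr (a/2)"
    using r2 assms by (intro powr_mono2) auto
  also have "\<dots> = (1 + u^2/4) powr (-(a/2))"
    using pos by (simp add: powr_minus inverse_powr)
  also have "1 + u^2/4 = 1 + s^2/(4*a)" by (simp add: u2)
  finally show ?thesis by (simp add: r_def u_def)
qed

lemma mono_bound: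
  fixes a0 a s :: real
  assumes "0 < a0" "a0 \<le> a"
  shows "(1 + s^2/(4*a)) powr (-(a/2)) \<le> (1 + s^2/(4*a0)) powr (-(a0/2))"
proof -
  have a: "a > 0" using assms by simp
  have "a0 * ln (1 + (s^2/4)/a0) \<le> a * ln (1 + (s^2/4)/a)"
    by (rule ln_conc) (use assms in auto)
  then have "-(a/2) * ln (1 + s^2/(4*a)) \<le> -(a0/2) * ln (1 + s^2/(4*a0))"
    by (simp add: field_simps)
  then have "exp (-(a/2) * ln (1 + s^2/(4*a))) \<le> exp (-(a0/2) * ln (1 + s^2/(4*a0)))"
    by simp
  moreover have "0 < 1 + s^2/(4*a)" "0 < 1 + s^2/(4*a0)" using a assms by (auto intro!: add_pos_nonneg)
  ultimately show ?thesis by (simp add: powr_def)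
qed


lemma w_half_leb:
  fixes c :: real
  assumes c: "c > -1"
  defines "a0 \<equiv> c + 3"
  shows "(\<lambda>s. (1 + s^2/(4*a0)) powr (-(a0/2)) * \<bar>s\<bar> powr c) absolutely_integrable_on {0<..}"
    (is "?w absolutely_integrable_on _")
proof -
  have a0: "a0 > 2" using c by (simp add: a0_def)
  define K where "K = (4*a0) powr (a0/2)"
  have "?w absolutely_integrable_on ({0<..1} \<union> {1..})"
  proof (rule set_integrable_Un)
    show "?w absolutely_integrable_on {0<..1}"
      unfolding set_integrable_def
    proof (rule Bochner_Integration.integrable_bound [OF _ _ AE_I2])
      show "integrable lebesgue (\<lambda>x. indicat_real {0<..1} x *\<^sub>R x powr c)"
        using c
        by (intro nonnegative_absolutely_integrable_1 [unfolded set_integrable_def] integrable_on_powr_from_0') auto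
      show "(\<lambda>x. indicat_real {0<..1} x *\<^sub>R ?w x) \<in> borel_measurable lebesgue"
        by (intro measurable_completion) measurable
      fix x :: real
      have "(1 + x^2/(4*a0)) powr (-(a0/2)) \<le> 1"
        using powr_mono2'[of "-(a0/2)" 1 "1 + x^2/(4*a0)"] a0 by simp
      then have "?w x \<le> 1 * \<bar>x\<bar> powr c" by (intro mult_right_mono) auto
      thus "norm (indicator {0<..1} x *\<^sub>R ?w x) \<le> norm (indicator {0<..1} x *\<^sub>R x powr c)"
        by (auto simp: indicator_def)
    qed
  next
    show "?w absolutely_integrable_on {1..}"
      unfolding set_integrable_def
    proof (rule Bochner_Integration.integrable_bound [OF _ _ AE_I2])
      have "(\<lambda>x. x powr (c - a0)) integrable_on {1..}"
        using has_integral_powr_to_inf[of "c - a0" 1] a0 unfolding integrable_on_def by (auto simp: a0_def)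
      then have "integrable lebesgue (\<lambda>x. indicat_real {1..} x *\<^sub>R x powr (c - a0))"
        by (intro nonnegative_absolutely_integrable_1 [unfolded set_integrable_def]) auto
      then show "integrable lebesgue (\<lambda>x. indicat_real {1..} x *\<^sub>R (K * x powr (c - a0)))"
        using integrable_mult_right[of K] by (simp add: mult.left_commute)
      show "(\<lambda>x. indicat_real {1..} x *\<^sub>R ?w x) \<in> borel_measurable lebesgue"
        by (intro measurable_completion) measurable
      fix x :: real
      show "norm (indicator {1..} x *\<^sub>R ?w x) \<le> norm (indicator {1..} x *\<^sub>R (K * x powr (c - a0)))"
      proof (cases "x \<ge> 1")
        case True
        have x0: "x > 0" using True by simp
        have "(1 + x^2/(4*a0)) powr (-(a0/2)) \<le> (x^2/(4*a0)) powr (-(a0/2))"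
          using a0 x0 by (intro powr_mono2') auto
        also have "(x^2/(4*a0)) powr (-(a0/2)) = K * x powr (-a0)"
        proof -
          have "(x^2/(4*a0)) powr (-(a0/2)) = (x^2) powr (-(a0/2)) / (4*a0) powr (-(a0/2))"
            by (rule powr_divide)
          also have "(x^2) powr (-(a0/2)) = x powr (-a0)"
          proof -
            have "x powr 2 = x^2" using powr_realpow[of x 2] x0 by simp
            then have "(x^2) powr (-(a0/2)) = (x powr 2) powr (-(a0/2))" by simp
            also have "\<dots> = x powr (-a0)" by (simp add: powr_powr)
            finally show ?thesis .
          qed
          also have "(4*a0) powr (-(a0/2)) = inverse K" unfolding K_def by (rule powr_minus)
          finally show ?thesis by (simp only: divide_inverse inverse_inverse_eq mult.commute)
        qed
        finally have h: "(1 + x^2/(4*a0)) powr (-(a0/2)) \<le> K * x powr (-a0)" .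
        have "?w x \<le> K * x powr (-a0) * x powr c"
          using x0 mult_right_mono[OF h, of "x powr c"] by simp
        also have "\<dots> = K * x powr (c - a0)" by (simp add: powr_add[symmetric] mult.assoc)
        finally have "?w x \<le> K * x powr (c - a0)" .
        moreover have "0 \<le> ?w x" by simp
        ultimately show ?thesis using True by (auto simp: indicator_def)
      qed (auto simp: indicator_def)
    qed
  qed auto
  also have "{0<..1} \<union> {1..} = ({0<..}::real set)" by auto
  finally show ?thesis .
qed



lemma w_int:
  fixes c :: real
  assumes c: "c > -1"
  shows "integrable lborel (\<lambda>s. (1 + s^2/(4*(c+3))) powr (-((c+3)/2)) * \<bar>s\<bar> powr c)"
proof (rule even_int(1))
  show "(\<lambda>s. (1 + s^2/(4*(c+3))) powr (-((c+3)/2)) * \<bar>s\<bar> powr c) \<in> borel_measurable borel"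
    by measurable
  show "set_integrable lborel {0<..} (\<lambda>s. (1 + s^2/(4*(c+3))) powr (-((c+3)/2)) * \<bar>s\<bar> powr c)"
    using w_half_leb[OF c] unfolding set_integrable_def
    by (subst integrable_completion[symmetric]) (auto, measurable)
qed simp

lemma g_int:
  fixes c :: real
  assumes c: "c > -1"
  shows "integrable lborel (\<lambda>s. exp (-(s^2)/6) * \<bar>s\<bar> powr c)"
    "(\<integral>s. exp (-(s^2)/6) * \<bar>s\<bar> powr c \<partial>lborel) = 6 powr ((c+1)/2) * Gamma ((c+1)/2)"
proof -
  have eqf: "(\<lambda>x. indicator {0<..} x *\<^sub>R (exp (-(x^2)/6) * \<bar>x\<bar> powr c)) =
        (\<lambda>x. indicator {0<..} x *\<^sub>R (exp (-(x^2)/6) * x powr c))"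
    by (auto simp: fun_eq_iff indicator_def)
  have si: "set_integrable lborel {0<..} (\<lambda>s. exp (-(s^2)/6) * \<bar>s\<bar> powr c)"
    using gauss_half(1)[OF c] unfolding set_integrable_def eqf .
  have m: "(\<lambda>s. exp (-(s^2)/6) * \<bar>s\<bar> powr c) \<in> borel_measurable borel" by measurable
  show "integrable lborel (\<lambda>s. exp (-(s^2)/6) * \<bar>s\<bar> powr c)"
    by (rule even_int(1)[OF _ m si]) simp
  have "(\<integral>s. exp (-(s^2)/6) * \<bar>s\<bar> powr c \<partial>lborel) = 2 * (LBINT x:{0<..}. exp (-(x^2)/6) * \<bar>x\<bar> powr c)"
    by (rule even_int(2)[OF _ m si]) simp
  also have "(LBINT x:{0<..}. exp (-(x^2)/6) * \<bar>x\<bar> powr c) = (LBINT x:{0<..}. exp (-(x^2)/6) * x powr c)"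
    unfolding set_lebesgue_integral_def eqf ..
  also have "\<dots> = 6 powr ((c+1)/2) * Gamma ((c+1)/2) / 2" by (rule gauss_half(2)[OF c])
  finally show "(\<integral>s. exp (-(s^2)/6) * \<bar>s\<bar> powr c \<partial>lborel) = 6 powr ((c+1)/2) * Gamma ((c+1)/2)"
    by simp
qed

lemma L_asymp: "(r::real) > 0 \<Longrightarrow> ((\<lambda>x. (\<bar>sin (r / sqrt x)\<bar> / \<bar>r / sqrt x\<bar>) powr x) \<longlongrightarrow> exp (-(r^2)/6)) at_top"
  apply real_asymp
  apply (simp add: power2_eq_square field_simps)
  done

lemma G_lim:
  fixes c s :: real
  shows "((\<lambda>a. (\<bar>sin (s / sqrt a)\<bar> / \<bar>s / sqrt a\<bar>) powr a * \<bar>s\<bar> powr c) \<longlongrightarrow> exp (-(s^2)/6) * \<bar>s\<bar> powr c) at_top"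
proof (cases "s = 0")
  case True then show ?thesis by simp
next
  case False
  define r where "r = \<bar>s\<bar>"
  have r: "r > 0" using False by (simp add: r_def)
  have e: "\<bar>sin (s / sqrt a)\<bar> / \<bar>s / sqrt a\<bar> = \<bar>sin (r / sqrt a)\<bar> / \<bar>r / sqrt a\<bar>" for a
  proof (cases "s \<ge> 0")
    case True then show ?thesis by (simp add: r_def)
  next
    case False
    then have "r = - s" by (simp add: r_def)
    have "sin (s / sqrt a) = - sin (r / sqrt a)" "s / sqrt a = - (r / sqrt a)"
      using \<open>r = - s\<close> by auto
    then show ?thesis by (simp only: abs_minus_cancel)
  qed
  have s2: "s^2 = r^2" by (simp add: r_def)
  have L: "((\<lambda>x. (\<bar>sin (r / sqrt x)\<bar> / \<bar>r / sqrt x\<bar>) powr x) \<longlongrightarrow> exp (-(r^2)/6)) at_top"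
    using r by (rule L_asymp)
  show ?thesis unfolding e s2 by (intro tendsto_mult L tendsto_const)
qed

lemma rewrite_int:
  fixes c \<alpha> :: real
  assumes a: "\<alpha> > 0"
  shows "\<alpha> powr ((c + 1) / 2) * I_int \<alpha> (\<alpha> - c) =
    (\<integral>s. (\<bar>sin (s / sqrt \<alpha>)\<bar> / \<bar>s / sqrt \<alpha>\<bar>) powr \<alpha> * \<bar>s\<bar> powr c \<partial>lborel)"
proof -
  define F where "F = (\<lambda>t. \<bar>sin t\<bar> powr \<alpha> * \<bar>t\<bar> powr (- (\<alpha> - c)))"
  define k where "k = 1 / sqrt \<alpha>"
  have k: "k > 0" using a by (simp add: k_def)
  have "I_int \<alpha> (\<alpha> - c) = integral\<^sup>L lborel F" by (simp add: I_int_def F_def)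
  also have "\<dots> = \<bar>k\<bar> *\<^sub>R (\<integral>x. F (0 + k * x) \<partial>lborel)"
    using k by (intro lborel_integral_real_affine) simp
  finally have I: "I_int \<alpha> (\<alpha> - c) = k * (\<integral>x. F (k * x) \<partial>lborel)" using k by simp
  have sq: "sqrt \<alpha> = \<alpha> powr (1/2)" using a by (simp add: powr_half_sqrt)
  have sa: "sqrt \<alpha> powr c = \<alpha> powr (c/2)"
    unfolding sq powr_powr by simp
  have pt: "\<alpha> powr ((c + 1) / 2) * k * F (k * x) =
      (\<bar>sin (x / sqrt \<alpha>)\<bar> / \<bar>x / sqrt \<alpha>\<bar>) powr \<alpha> * \<bar>x\<bar> powr c" for x
  proof (cases "x = 0")
    case True then show ?thesis by (simp add: F_def)
  next
    case False
    define u where "u = x / sqrt \<alpha>"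
    have ku: "k * x = u" by (simp add: k_def u_def)
    have u0: "\<bar>u\<bar> > 0" using False a by (simp add: u_def)
    have ap: "\<alpha> powr (c/2) > 0" using a by simp
    have e1: "\<alpha> powr ((c + 1) / 2) * k = \<alpha> powr (c/2)"
    proof -
      have "(c + 1) / 2 = c/2 + 1/2" by simp
      then have "\<alpha> powr ((c + 1) / 2) = \<alpha> powr (c/2) * \<alpha> powr (1/2)"
        by (simp only: powr_add)
      also have "\<alpha> powr (1/2) = sqrt \<alpha>" using sq by simp
      finally show ?thesis using a by (simp add: k_def)
    qed
    have e2: "\<bar>u\<bar> powr (- (\<alpha> - c)) = inverse (\<bar>u\<bar> powr \<alpha>) * \<bar>u\<bar> powr c"
    proof -
      have "- (\<alpha> - c) = - \<alpha> + c" by simp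
      then have "\<bar>u\<bar> powr (- (\<alpha> - c)) = \<bar>u\<bar> powr (- \<alpha>) * \<bar>u\<bar> powr c"
        by (simp only: powr_add)
      then show ?thesis by (simp only: powr_minus)
    qed
    have e3: "\<bar>u\<bar> powr c = \<bar>x\<bar> powr c * inverse (\<alpha> powr (c/2))"
    proof -
      have "\<bar>u\<bar> = \<bar>x\<bar> / sqrt \<alpha>" using a by (simp add: u_def abs_divide)
      then have "\<bar>u\<bar> powr c = \<bar>x\<bar> powr c / sqrt \<alpha> powr c" by (simp only: powr_divide)
      then show ?thesis by (simp only: sa divide_inverse)
    qed
    have e4: "(\<bar>sin u\<bar> / \<bar>u\<bar>) powr \<alpha> = \<bar>sin u\<bar> powr \<alpha> * inverse (\<bar>u\<bar> powr \<alpha>)"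
      unfolding powr_divide by (simp only: divide_inverse)
    have "\<alpha> powr ((c + 1) / 2) * k * F (k * x) = \<alpha> powr (c/2) * (\<bar>sin u\<bar> powr \<alpha> * (inverse (\<bar>u\<bar> powr \<alpha>) * (\<bar>x\<bar> powr c * inverse (\<alpha> powr (c/2)))))"
      unfolding e1 ku F_def e2 e3 by (simp only: mult_ac)
    also have "\<dots> = (\<alpha> powr (c/2) * inverse (\<alpha> powr (c/2))) * (\<bar>sin u\<bar> powr \<alpha> * inverse (\<bar>u\<bar> powr \<alpha>) * \<bar>x\<bar> powr c)"
      by (simp only: mult_ac)
    also have "\<dots> = \<bar>sin u\<bar> powr \<alpha> * inverse (\<bar>u\<bar> powr \<alpha>) * \<bar>x\<bar> powr c"
      using ap by simp
    also have "\<dots> = (\<bar>sin u\<bar> / \<bar>u\<bar>) powr \<alpha> * \<bar>x\<bar> powr c" unfolding e4 ..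
    finally show ?thesis by (simp add: u_def)
  qed
  have "\<alpha> powr ((c + 1) / 2) * I_int \<alpha> (\<alpha> - c) = (\<integral>x. \<alpha> powr ((c + 1) / 2) * k * F (k * x) \<partial>lborel)"
    unfolding I by (simp add: mult.assoc)
  also have "\<dots> = (\<integral>s. (\<bar>sin (s / sqrt \<alpha>)\<bar> / \<bar>s / sqrt \<alpha>\<bar>) powr \<alpha> * \<bar>s\<bar> powr c \<partial>lborel)"
    unfolding pt ..
  finally show ?thesis .
qed



theorem mainTheorem5:
  fixes c :: real
  assumes "c > -1"
  shows "((\<lambda>\<alpha>. \<alpha> powr ((c + 1) / 2) * I_int \<alpha> (\<alpha> - c))
           \<longlongrightarrow> 6 powr ((c + 1) / 2) * Gamma ((c + 1) / 2)) at_top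
       \<and> ((\<lambda>\<alpha>. sqrt \<alpha> * I_int \<alpha> \<alpha>) \<longlongrightarrow> sqrt (6 * pi)) at_top"
proof -
  have part: "((\<lambda>\<alpha>. \<alpha> powr ((c + 1) / 2) * I_int \<alpha> (\<alpha> - c)) \<longlongrightarrow> 6 powr ((c + 1) / 2) * Gamma ((c + 1) / 2)) at_top"
    if c: "c > -1" for c :: real
  proof -
    define G where "G = (\<lambda>a s. (\<bar>sin (s / sqrt a)\<bar> / \<bar>s / sqrt a\<bar>) powr a * \<bar>s\<bar> powr c)"
    define g where "g = (\<lambda>s. exp (-(s^2)/6) * \<bar>s\<bar> powr c)"
    define w where "w = (\<lambda>s. (1 + s^2/(4*(c+3))) powr (-((c+3)/2)) * \<bar>s\<bar> powr c)"
    have lim: "((\<lambda>a. integral\<^sup>L lborel (G a)) \<longlongrightarrow> integral\<^sup>L lborel g) at_top"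
    proof (rule integral_dominated_convergence_at_top[where w = w])
      show "g \<in> borel_measurable lborel" unfolding g_def by measurable
      show "G a \<in> borel_measurable lborel" for a unfolding G_def by measurable
      show "integrable lborel w" unfolding w_def by (rule w_int[OF c])
      show "AE x in lborel. ((\<lambda>i. G i x) \<longlongrightarrow> g x) at_top"
        unfolding G_def g_def by (intro AE_I2 G_lim)
      show "\<forall>\<^sub>F i in at_top. AE x in lborel. norm (G i x) \<le> w x"
      proof -
        have "\<forall>\<^sub>F i in at_top. i \<ge> c + 3" by (rule eventually_ge_at_top)
        then show ?thesis
        proof eventually_elim
          case (elim i)
          have i0: "i > 0" using elim c by simp
          show ?case
          proof (rule AE_I2)
            fix x
            have G0: "0 \<le> G i x" unfolding G_def by simp
            have "G i x \<le> (1 + x^2/(4*i)) powr (-(i/2)) * \<bar>x\<bar> powr c"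
              unfolding G_def by (intro mult_right_mono ratio_bound i0) simp
            also have "\<dots> \<le> w x"
              unfolding w_def by (intro mult_right_mono mono_bound) (use elim c in auto)
            finally show "norm (G i x) \<le> w x" using G0 by simp
          qed
        qed
      qed
    qed
    have ev: "\<forall>\<^sub>F \<alpha> in at_top. integral\<^sup>L lborel (G \<alpha>) = \<alpha> powr ((c + 1) / 2) * I_int \<alpha> (\<alpha> - c)"
      using eventually_gt_at_top[of "0::real"] by eventually_elim (simp add: rewrite_int G_def)
    have "((\<lambda>\<alpha>. \<alpha> powr ((c + 1) / 2) * I_int \<alpha> (\<alpha> - c)) \<longlongrightarrow> integral\<^sup>L lborel g) at_top"
      using tendsto_cong[OF ev] lim by simp
    then show ?thesis using g_int(2)[OF c] by (simp add: g_def)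
  qed
  show ?thesis
  proof
    show "((\<lambda>\<alpha>. \<alpha> powr ((c + 1) / 2) * I_int \<alpha> (\<alpha> - c)) \<longlongrightarrow> 6 powr ((c + 1) / 2) * Gamma ((c + 1) / 2)) at_top"
      using part[OF assms] .
    have "((\<lambda>\<alpha>. \<alpha> powr ((0 + 1) / 2) * I_int \<alpha> (\<alpha> - 0)) \<longlongrightarrow> 6 powr ((0 + 1) / 2) * Gamma ((0 + 1) / 2)) at_top"
      by (rule part) simp
    then have h: "((\<lambda>\<alpha>. \<alpha> powr (1/2) * I_int \<alpha> \<alpha>) \<longlongrightarrow> 6 powr (1/2) * Gamma (1/2)) at_top"
      by simp
    have v: "6 powr (1/2) * Gamma (1/2) = sqrt (6 * pi)"
      by (simp add: Gamma_one_half_real powr_half_sqrt real_sqrt_mult)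
    have ev2: "\<forall>\<^sub>F \<alpha> in at_top. \<alpha> powr (1/2) * I_int \<alpha> \<alpha> = sqrt \<alpha> * I_int \<alpha> \<alpha>"
      using eventually_ge_at_top[of "0::real"] by eventually_elim (simp add: powr_half_sqrt)
    show "((\<lambda>\<alpha>. sqrt \<alpha> * I_int \<alpha> \<alpha>) \<longlongrightarrow> sqrt (6 * pi)) at_top"
      using tendsto_cong[OF ev2] h unfolding v by simp
  qed
qed
end
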